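(* Let $S$ be a finite relational signature and let $R$ be a relational Bayesian network (RBN) over $S$ that contains no combination functions, i.e. for each $r/k\in S$ its probability formula $F_r(X_1,\ldots,X_k)$ is built only from constants $q\in[0,1]$, atoms $s(Y_1,\ldots,Y_l)$ with $s/l\in S$ and each $Y_j\in\{X_1,\ldots,X_k\}$, and convex combinations $F_1\cdot F_2+(1-F_1)\cdot F_3$; and suppose $R$ is acyclic for every domain size. Then the family $\{Q^{(n)}\mid n\in\mathbb{N}\}$ of distributions defined by $R$ is a projective random relational structure model.
   Context: A relational signature $S$ is a set of relation symbols with arities, written $r/k$ ($k\geq 0$). For $n\in\mathbb{N}$ let $[n]=\{0,\ldots,n-1\}$ and let $\Omega^{(n)}$ be the set of all possible worlds for $S$ over domain $[n]$, i.e. truth assignments to all ground atoms $r(\mathbf{i})$ with $r/k\in S$, $\mathbf{i}\in[n]^k$. A random relational structure model (RRSM) is a family $\{Q^{(n)}\mid n\in\mathbb{N}\}$ with $Q^{(n)}$ a probability distribution on $\Omega^{(n)}$. $Q^{(n)}$ is exchangeable if $Q^{(n)}(\omega)=Q^{(n)}(\omega')$ whenever $\omega,\omega'$ are isomorphic. For $m\le n$, $Q^{(n)}\downarrow[m]$ denotes the marginal distribution of $Q^{(n)}$ on the ground atoms $r(\mathbf{i})$ with $\mathbf{i}\in[m]^k$ (identified with a distribution on $\Omega^{(m)}$). An RRSM is projective if every $Q^{(n)}$ is exchangeable and $Q^{(n)}\downarrow[m]=Q^{(m)}$ for all $m<n$. RBN semantics (combination-function-free fragment): an RBN assigns to each $r/k\in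 S$ a probability formula $F_r(X_1,\ldots,X_k)$ in distinct variables $X_1,\ldots,X_k$, built as described in the claim. For a domain $[n]$ and $\mathbf{i}\in[n]^k$, substituting $\mathbf{i}$ for $(X_1,\ldots,X_k)$ gives a ground formula $F_r(\mathbf{i})$ whose value in $[0,1]$ is computed in a world $\omega$ by: a constant evaluates to itself, a ground atom evaluates to $1$ if true in $\omega$ and $0$ otherwise, and $F_1F_2+(1-F_1)F_3$ is evaluated arithmetically. The parents of $r(\mathbf{i})$ are the ground atoms occurring in $F_r(\mathbf{i})$. The RBN is acyclic if for every $n$ this parent relation on ground atoms over $[n]$ is acyclic. Then $Q^{(n)}(\omega)=\prod_{r/k\in S}\prod_{\mathbf{i}\in[n]^k} p_{r,\mathbf{i}}(\omega)$, where $p_{r,\mathbf{i}}(\omega)$ is the value of $F_r(\mathbf{i})$ in $\omega$ if $r(\mathbf{i})$ is true in $\omega$ and one minus this value otherwise (i.e. $Q^{(n)}$ is the Bayesian network on the ground atoms with these parents and conditional probabilities). *)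

theory Defs
  imports Complex_Main
begin

text \<open>A possible world over [n] = {0..<n} is the set of ground atoms
  that are true in it.\<close>

type_synonym 'r gatom = "'r \<times> nat list"

definition gatoms :: "'r set \<Rightarrow> ('r \<Rightarrow> nat) \<Rightarrow> nat \<Rightarrow> 'r gatom set" where
  "gatoms S ar n = {(r, i). r \<in> S \<and> length i = ar r \<and> set i \<subseteq> {..<n}}"

definition worlds :: "'r set \<Rightarrow> ('r \<Rightarrow> nat) \<Rightarrow> nat \<Rightarrow> 'r gatom set set" where
  "worlds S ar n = Pow (gatoms S ar n)"

text \<open>Probability formulas without combination functions.  The variables
  X_1,...,X_k of F_r are represented by the indices 0,...,k-1.\<close>

datatype 'r pform =
    PConst real
  | PAtom 'r "nat list"
  | PConv "'r pform" "'r pform" "'r pform"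

fun wf_pform :: "'r set \<Rightarrow> ('r \<Rightarrow> nat) \<Rightarrow> nat \<Rightarrow> 'r pform \<Rightarrow> bool" where
  "wf_pform S ar k (PConst q) = (0 \<le> q \<and> q \<le> 1)"
| "wf_pform S ar k (PAtom s vs) = (s \<in> S \<and> length vs = ar s \<and> (\<forall>v\<in>set vs. v < k))"
| "wf_pform S ar k (PConv F1 F2 F3) =
     (wf_pform S ar k F1 \<and> wf_pform S ar k F2 \<and> wf_pform S ar k F3)"

fun peval :: "'r pform \<Rightarrow> nat list \<Rightarrow> 'r gatom set \<Rightarrow> real" where
  "peval (PConst q) i w = q"
| "peval (PAtom s vs) i w = (if (s, map (\<lambda>j. i ! j) vs) \<in> w then 1 else 0)"
| "peval (PConv F1 F2 F3) i w =
     peval F1 i w * peval F2 i w + (1 - peval F1 i w) * peval F3 i w"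

fun patoms :: "'r pform \<Rightarrow> nat list \<Rightarrow> 'r gatom set" where
  "patoms (PConst q) i = {}"
| "patoms (PAtom s vs) i = {(s, map (\<lambda>j. i ! j) vs)}"
| "patoms (PConv F1 F2 F3) i = patoms F1 i \<union> patoms F2 i \<union> patoms F3 i"

text \<open>Parent relation on ground atoms over [n]: (a, b) means a is a parent of b.\<close>
definition parent_rel ::
  "'r set \<Rightarrow> ('r \<Rightarrow> nat) \<Rightarrow> ('r \<Rightarrow> 'r pform) \<Rightarrow> nat \<Rightarrow> 'r gatom rel" where
  "parent_rel S ar F n = {(a, (r, i)) | a r i. (r, i) \<in> gatoms S ar n \<and> a \<in> patoms (F r) i}"

definition rbn_acyclic :: "'r set \<Rightarrow> ('r \<Rightarrow> nat) \<Rightarrow> ('r \<Rightarrow> 'r pform) \<Rightarrow> bool" where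
  "rbn_acyclic S ar F = (\<forall>n. acyclic (parent_rel S ar F n))"

definition rbn_dist ::
  "'r set \<Rightarrow> ('r \<Rightarrow> nat) \<Rightarrow> ('r \<Rightarrow> 'r pform) \<Rightarrow> nat \<Rightarrow> 'r gatom set \<Rightarrow> real" where
  "rbn_dist S ar F n w =
     (\<Prod>(r, i)\<in>gatoms S ar n.
        if (r, i) \<in> w then peval (F r) i w else 1 - peval (F r) i w)"

definition is_distribution :: "'a set \<Rightarrow> ('a \<Rightarrow> real) \<Rightarrow> bool" where
  "is_distribution \<Omega> P = ((\<forall>w\<in>\<Omega>. 0 \<le> P w) \<and> (\<Sum>w\<in>\<Omega>. P w) = 1)"

definition is_RRSM :: "'r set \<Rightarrow> ('r \<Rightarrow> nat) \<Rightarrow> (nat \<Rightarrow> 'r gatom set \<Rightarrow> real) \<Rightarrow> bool" where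
  "is_RRSM S ar Q = (\<forall>n. is_distribution (worlds S ar n) (Q n))"

definition isomorphic_worlds ::
  "'r set \<Rightarrow> ('r \<Rightarrow> nat) \<Rightarrow> nat \<Rightarrow> 'r gatom set \<Rightarrow> 'r gatom set \<Rightarrow> bool" where
  "isomorphic_worlds S ar n w w' =
     (\<exists>\<pi>. bij_betw \<pi> {..<n} {..<n} \<and>
        (\<forall>(r, i)\<in>gatoms S ar n. ((r, i) \<in> w \<longleftrightarrow> (r, map \<pi> i) \<in> w')))"

definition exchangeable ::
  "'r set \<Rightarrow> ('r \<Rightarrow> nat) \<Rightarrow> nat \<Rightarrow> ('r gatom set \<Rightarrow> real) \<Rightarrow> bool" where
  "exchangeable S ar n P =
     (\<forall>w\<in>worlds S ar n. \<forall>w'\<in>worlds S ar n.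
        isomorphic_worlds S ar n w w' \<longrightarrow> P w = P w')"

definition marginal ::
  "'r set \<Rightarrow> ('r \<Rightarrow> nat) \<Rightarrow> nat \<Rightarrow> ('r gatom set \<Rightarrow> real) \<Rightarrow> nat \<Rightarrow> 'r gatom set \<Rightarrow> real" where
  "marginal S ar n P m w =
     (\<Sum>w'\<in>{w'\<in>worlds S ar n. w' \<inter> gatoms S ar m = w}. P w')"

definition projective :: "'r set \<Rightarrow> ('r \<Rightarrow> nat) \<Rightarrow> (nat \<Rightarrow> 'r gatom set \<Rightarrow> real) \<Rightarrow> bool" where
  "projective S ar Q =
     ((\<forall>n. exchangeable S ar n (Q n)) \<and>
      (\<forall>m n. m < n \<longrightarrow> (\<forall>w\<in>worlds S ar m. marginal S ar n (Q n) m w = Q m w)))"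

end

theory Submission
  imports Defs
begin

definition cpv :: "('a \<Rightarrow> 'a set \<Rightarrow> real) \<Rightarrow> 'a \<Rightarrow> 'a set \<Rightarrow> real" where
  "cpv p a w = (if a \<in> w then p a w else 1 - p a w)"

lemma sum_split_insert:
  assumes "a \<notin> A'" "a \<notin> B" "finite A'"
  shows "(\<Sum>w\<in>{w. w \<subseteq> insert a A' \<and> w \<inter> B = v}. g w)
        = (\<Sum>w\<in>{w. w \<subseteq> A' \<and> w \<inter> B = v}. g w + g (insert a w))"
proof -
  let ?X = "{w. w \<subseteq> A' \<and> w \<inter> B = v}"
  have eq: "{w. w \<subseteq> insert a A' \<and> w \<inter> B = v} = ?X \<union> insert a ` ?X"
  proof
    show "{w. w \<subseteq> insert a A' \<and> w \<inter> B = v} \<subseteq> ?X \<union> insert a ` ?X"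
    proof
      fix w assume w: "w \<in> {w. w \<subseteq> insert a A' \<and> w \<inter> B = v}"
      show "w \<in> ?X \<union> insert a ` ?X"
      proof (cases "a \<in> w")
        case True
        obtain w' where wd: "w = insert a w'" and nw: "a \<notin> w'"
          using mk_disjoint_insert[OF True] by blast
        have m: "w' \<in> ?X" using w assms(2) wd nw by auto
        have "w \<in> insert a ` ?X" unfolding wd using m by (rule imageI)
        then show ?thesis by (rule UnI2)
      next
        case False
        have "w \<in> ?X" using w False by blast
        then show ?thesis by (rule UnI1)
      qed
    qed
  next
    have "insert a w \<in> {w. w \<subseteq> insert a A' \<and> w \<inter> B = v}" if "w \<in> ?X" for w
      using that assms(2) by auto
    moreover have "?X \<subseteq> {w. w \<subseteq> insert a A' \<and> w \<inter> B = v}" by auto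
    ultimately show "?X \<union> insert a ` ?X \<subseteq> {w. w \<subseteq> insert a A' \<and> w \<inter> B = v}" by blast
  qed
  have finX: "finite ?X"
    by (rule finite_subset[of _ "Pow A'"]) (use assms(3) in auto)
  have disj: "?X \<inter> insert a ` ?X = {}"
  proof (rule equals0I)
    fix x assume x: "x \<in> ?X \<inter> insert a ` ?X"
    then obtain y where "x = insert a y" by blast
    then have "a \<in> x" by simp
    moreover have "x \<subseteq> A'" using x by blast
    ultimately show False using assms(1) by blast
  qed
  have inj: "inj_on (insert a) ?X"
  proof (rule inj_onI)
    fix x y assume x: "x \<in> ?X" and y: "y \<in> ?X" and e: "insert a x = insert a y"
    have "a \<notin> x" "a \<notin> y" using x y assms(1) by blast+
    then have "x = insert a x - {a}" "y = insert a y - {a}" by simp_all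
    then show "x = y" using e by metis
  qed
  have "(\<Sum>w\<in>?X \<union> insert a ` ?X. g w) = (\<Sum>w\<in>?X. g w) + (\<Sum>w\<in>insert a ` ?X. g w)"
    by (rule sum.union_disjoint[OF finX _ disj]) (use finX in simp)
  also have "(\<Sum>w\<in>insert a ` ?X. g w) = (\<Sum>w\<in>?X. g (insert a w))"
    by (rule sum.reindex_cong[OF inj refl refl])
  finally show ?thesis unfolding eq by (simp only: sum.distrib)
qed

lemma bn_marg:
  fixes A B :: "'a set" and pa :: "'a \<Rightarrow> 'a set" and p :: "'a \<Rightarrow> 'a set \<Rightarrow> real"
  assumes "finite A" "B \<subseteq> A" "\<forall>a\<in>A. pa a \<subseteq> A" "\<forall>a\<in>B. pa a \<subseteq> B"
    and loc: "\<forall>a\<in>A. \<forall>w w'. w \<inter> pa a = w' \<inter> pa a \<longrightarrow> p a w = p a w'"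
    and acyc: "acyclic {(x, a). a \<in> A \<and> x \<in> pa a}"
    and "v \<subseteq> B"
  shows "(\<Sum>w\<in>{w. w \<subseteq> A \<and> w \<inter> B = v}. \<Prod>a\<in>A. cpv p a w) = (\<Prod>a\<in>B. cpv p a v)"
  using assms
proof (induction "card (A - B)" arbitrary: A)
  case 0
  then have AB: "A = B" by auto
  have "{w. w \<subseteq> A \<and> w \<inter> B = v} = {v}" using AB 0(8) by auto
  then show ?case using AB by simp
next
  case (Suc k)
  define R where "R = {(x, a). a \<in> A \<and> x \<in> pa a}"
  have finR: "finite R"
  proof -
    have "R \<subseteq> A \<times> A" using Suc.prems(3) unfolding R_def by auto
    then show ?thesis using Suc.prems(1) finite_subset by blast
  qed
  have "wf (R\<inverse>)" using finR Suc.prems(6) unfolding R_def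
    by (simp add: finite_acyclic_wf acyclic_converse)
  moreover have "A - B \<noteq> {}" using Suc.hyps(2) by (metis card.empty nat.distinct(1))
  then obtain x where "x \<in> A - B" by blast
  ultimately have "\<exists>z\<in>A - B. \<forall>y. (y, z) \<in> R\<inverse> \<longrightarrow> y \<notin> A - B"
    using wf_eq_minimal[THEN iffD1, rule_format, of "R\<inverse>" x "A - B"] by blast
  then obtain a where a: "a \<in> A - B" and sink: "\<forall>y. (a, y) \<in> R \<longrightarrow> y \<notin> A - B"
    by auto
  define A' where "A' = A - {a}"
  have Aeq: "A = insert a A'" using a A'_def by auto
  have aA': "a \<notin> A'" "a \<notin> B" using a A'_def by auto
  have nopa: "a \<notin> pa b" if "b \<in> A" for b
  proof (cases "b \<in> B")
    case True then show ?thesis using Suc.prems(4) a by auto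
  next
    case False then show ?thesis using sink that unfolding R_def by auto
  qed
  have IH: "(\<Sum>w\<in>{w. w \<subseteq> A' \<and> w \<inter> B = v}. \<Prod>a\<in>A'. cpv p a w) = (\<Prod>a\<in>B. cpv p a v)"
  proof (rule Suc.hyps(1))
    have "A' - B = (A - B) - {a}" by (auto simp: A'_def)
    then show "k = card (A' - B)" using Suc.hyps(2) a by (simp add: card_Diff_singleton)
    show "finite A'" using Suc.prems(1) A'_def by simp
    show "B \<subseteq> A'" using Suc.prems(2) a A'_def by auto
    show "\<forall>b\<in>A'. pa b \<subseteq> A'" using Suc.prems(3) nopa A'_def by auto
    show "\<forall>a\<in>B. pa a \<subseteq> B" by (rule Suc.prems(4))
    show "\<forall>a\<in>A'. \<forall>w w'. w \<inter> pa a = w' \<inter> pa a \<longrightarrow> p a w = p a w'"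
      using Suc.prems(5) unfolding A'_def by (meson DiffD1)
    show "acyclic {(x, a). a \<in> A' \<and> x \<in> pa a}"
      by (rule acyclic_subset[OF Suc.prems(6)]) (auto simp: A'_def)
    show "v \<subseteq> B" by (rule Suc.prems(7))
  qed
  have step: "(\<Prod>b\<in>A. cpv p b w) + (\<Prod>b\<in>A. cpv p b (insert a w)) = (\<Prod>b\<in>A'. cpv p b w)"
    if "w \<subseteq> A'" for w
  proof -
    have fA': "finite A'" using Suc.prems(1) A'_def by simp
    have e1: "cpv p b (insert a w) = cpv p b w" if "b \<in> A'" for b
    proof -
      have "b \<noteq> a" using that aA' by auto
      moreover have "p b (insert a w) = p b w"
      proof -
        have "b \<in> A" using that A'_def by auto
        moreover have "insert a w \<inter> pa b = w \<inter> pa b" using nopa[OF \<open>b \<in> A\<close>] by auto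
        ultimately show ?thesis using Suc.prems(5)[rule_format, of b "insert a w" w] by simp
      qed
      ultimately show ?thesis unfolding cpv_def by simp
    qed
    have pa_eq: "p a (insert a w) = p a w"
    proof -
      have "a \<in> A" using a by auto
      moreover have "insert a w \<inter> pa a = w \<inter> pa a" using nopa[OF \<open>a \<in> A\<close>] by auto
      ultimately show ?thesis using Suc.prems(5)[rule_format, of a "insert a w" w] by simp
    qed
    have c1: "cpv p a w = 1 - p a w" using that aA' unfolding cpv_def by auto
    have c2: "cpv p a (insert a w) = p a w" using pa_eq unfolding cpv_def by simp
    have pr: "(\<Prod>b\<in>A'. cpv p b (insert a w)) = (\<Prod>b\<in>A'. cpv p b w)"
      using e1 by (rule prod.cong[OF refl])
    have q1: "(\<Prod>b\<in>A. cpv p b w) = cpv p a w * (\<Prod>b\<in>A'. cpv p b w)"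
      unfolding Aeq using fA' aA' by simp
    have q2: "(\<Prod>b\<in>A. cpv p b (insert a w)) = cpv p a (insert a w) * (\<Prod>b\<in>A'. cpv p b w)"
      unfolding Aeq using fA' aA' pr by simp
    have "(\<Prod>b\<in>A. cpv p b w) + (\<Prod>b\<in>A. cpv p b (insert a w))
       = (cpv p a w + cpv p a (insert a w)) * (\<Prod>b\<in>A'. cpv p b w)"
      unfolding q1 q2 by (rule distrib_right[symmetric])
    also have "cpv p a w + cpv p a (insert a w) = 1" unfolding c1 c2 by simp
    finally show ?thesis by simp
  qed
  have "(\<Sum>w\<in>{w. w \<subseteq> A \<and> w \<inter> B = v}. \<Prod>a\<in>A. cpv p a w)
      = (\<Sum>w\<in>{w. w \<subseteq> A' \<and> w \<inter> B = v}. (\<Prod>b\<in>A. cpv p b w) + (\<Prod>b\<in>A. cpv p b (insert a w)))"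
    unfolding Aeq by (rule sum_split_insert[OF aA']) (use Suc.prems(1) A'_def in simp)
  also have "\<dots> = (\<Sum>w\<in>{w. w \<subseteq> A' \<and> w \<inter> B = v}. \<Prod>b\<in>A'. cpv p b w)"
    using step by (intro sum.cong) auto
  finally show ?case using IH by simp
qed


lemma mem_gatoms: "(r, i) \<in> gatoms S ar n \<longleftrightarrow> r \<in> S \<and> length i = ar r \<and> set i \<subseteq> {..<n}"
  unfolding gatoms_def by simp

lemma finite_gatoms:
  assumes "finite S" shows "finite (gatoms S ar n)"
proof -
  have "gatoms S ar n \<subseteq> (\<Union>r\<in>S. {r} \<times> {i. set i \<subseteq> {..<n} \<and> length i = ar r})"
    unfolding gatoms_def by auto
  moreover have "finite (\<Union>r\<in>S. {r} \<times> {i. set i \<subseteq> {..<n} \<and> length i = ar r})"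
    using assms by (intro finite_UN_I) (auto intro: finite_lists_length_eq)
  ultimately show ?thesis using finite_subset by blast
qed

lemma peval_range:
  "wf_pform S ar k F \<Longrightarrow> 0 \<le> peval F i w \<and> peval F i w \<le> 1"
proof (induction F)
  case (PConv F1 F2 F3)
  then have h: "0 \<le> peval F1 i w" "peval F1 i w \<le> 1" "0 \<le> peval F2 i w" "peval F2 i w \<le> 1"
    "0 \<le> peval F3 i w" "peval F3 i w \<le> 1" by auto
  let ?x = "peval F1 i w" and ?y = "peval F2 i w" and ?z = "peval F3 i w"
  have "?x * ?y \<le> ?x" using h by (simp add: mult_left_le)
  moreover have "(1 - ?x) * ?z \<le> 1 - ?x" using h by (simp add: mult_left_le)
  moreover have "0 \<le> ?x * ?y" "0 \<le> (1 - ?x) * ?z" using h by auto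
  ultimately show ?case by simp
qed auto

lemma peval_local:
  "w \<inter> patoms F i = w' \<inter> patoms F i \<Longrightarrow> peval F i w = peval F i w'"
proof (induction F)
  case (PConv F1 F2 F3)
  then have "peval F1 i w = peval F1 i w'" "peval F2 i w = peval F2 i w'" "peval F3 i w = peval F3 i w'"
    by auto
  then show ?case by simp
qed auto

lemma nth_lt: "set i \<subseteq> {..<n} \<Longrightarrow> v < length i \<Longrightarrow> i ! v < n"
  by (meson lessThan_iff nth_mem subsetD)

lemma patoms_sub:
  "wf_pform S ar (length i) F \<Longrightarrow> set i \<subseteq> {..<n} \<Longrightarrow> patoms F i \<subseteq> gatoms S ar n"
proof (induction F)
  case (PAtom s vs)
  then show ?case by (auto simp: mem_gatoms nth_lt)
qed auto

lemma peval_perm: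
  assumes "set i \<subseteq> {..<n}"
    and iso: "\<forall>(r, j)\<in>gatoms S ar n. ((r, j) \<in> w \<longleftrightarrow> (r, map \<pi> j) \<in> w')"
  shows "wf_pform S ar (length i) F \<Longrightarrow> peval F (map \<pi> i) w' = peval F i w"
proof (induction F)
  case (PAtom s vs)
  have eq: "map (\<lambda>j. map \<pi> i ! j) vs = map \<pi> (map (\<lambda>j. i ! j) vs)"
    using PAtom by auto
  have "(s, map (\<lambda>j. i ! j) vs) \<in> gatoms S ar n"
    using PAtom assms(1) by (auto simp: mem_gatoms nth_lt)
  then have "(s, map (\<lambda>j. i ! j) vs) \<in> w \<longleftrightarrow> (s, map \<pi> (map (\<lambda>j. i ! j) vs)) \<in> w'"
    using iso by blast
  have "peval (PAtom s vs) (map \<pi> i) w' = (if (s, map \<pi> (map (\<lambda>j. i ! j) vs)) \<in> w' then 1 else 0)"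
    by (simp only: peval.simps eq)
  then show ?case using \<open>(s, map (\<lambda>j. i ! j) vs) \<in> w \<longleftrightarrow> _\<close> by simp
qed auto

definition pv :: "('r \<Rightarrow> 'r pform) \<Rightarrow> 'r gatom \<Rightarrow> 'r gatom set \<Rightarrow> real" where
  "pv F a w = peval (F (fst a)) (snd a) w"

lemma rbn_dist_eq: "rbn_dist S ar F n w = (\<Prod>a\<in>gatoms S ar n. cpv (pv F) a w)"
  unfolding rbn_dist_def cpv_def pv_def by (intro prod.cong) auto

theorem mainTheorem1:
  fixes S :: "'r set" and ar :: "'r \<Rightarrow> nat" and F :: "'r \<Rightarrow> 'r pform"
  assumes "finite S"
    and "\<forall>r\<in>S. wf_pform S ar (ar r) (F r)"
    and "rbn_acyclic S ar F"
  shows "is_RRSM S ar (rbn_dist S ar F) \<and> projective S ar (rbn_dist S ar F)"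
proof -
  let ?pa = "\<lambda>a. patoms (F (fst a)) (snd a)"
  have fin: "finite (gatoms S ar n)" for n using assms(1) by (rule finite_gatoms)
  have closed: "\<forall>a\<in>gatoms S ar n. ?pa a \<subseteq> gatoms S ar n" for n
  proof
    fix a assume a: "a \<in> gatoms S ar n"
    obtain r i where ri: "a = (r, i)" by fastforce
    have "wf_pform S ar (length i) (F r)" "set i \<subseteq> {..<n}" using a ri assms(2) by (auto simp: mem_gatoms)
    then show "?pa a \<subseteq> gatoms S ar n" using ri patoms_sub[of S ar i "F r" n] by simp
  qed
  have loc: "\<forall>a\<in>gatoms S ar n. \<forall>w w'. w \<inter> ?pa a = w' \<inter> ?pa a \<longrightarrow> pv F a w = pv F a w'" for n
    unfolding pv_def using peval_local by blast
  have acyc: "acyclic {(x, a). a \<in> gatoms S ar n \<and> x \<in> ?pa a}" for n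
  proof -
    have "{(x, a). a \<in> gatoms S ar n \<and> x \<in> ?pa a} = parent_rel S ar F n"
      unfolding parent_rel_def by auto
    then show ?thesis using assms(3) unfolding rbn_acyclic_def by simp
  qed
  have rng: "0 \<le> pv F a w \<and> pv F a w \<le> 1" if "a \<in> gatoms S ar n" for a w n
  proof -
    obtain r i where ri: "a = (r, i)" by fastforce
    have "r \<in> S" using that ri by (simp add: mem_gatoms)
    then have "wf_pform S ar (ar r) (F r)" using assms(2) by blast
    then show ?thesis unfolding pv_def ri using peval_range[of S ar "ar r" "F r" i w] by simp
  qed
  have marg: "(\<Sum>w\<in>{w. w \<subseteq> gatoms S ar n \<and> w \<inter> B = v}. rbn_dist S ar F n w) = (\<Prod>a\<in>B. cpv (pv F) a v)"
    if "B \<subseteq> gatoms S ar n" "\<forall>a\<in>B. ?pa a \<subseteq> B" "v \<subseteq> B" for n B v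
    unfolding rbn_dist_eq
    by (rule bn_marg[OF fin that(1) closed that(2) loc acyc that(3)])
  have rrsm: "is_RRSM S ar (rbn_dist S ar F)"
    unfolding is_RRSM_def is_distribution_def
  proof (intro allI conjI ballI)
    fix n w
    show "0 \<le> rbn_dist S ar F n w" unfolding rbn_dist_eq cpv_def
      by (intro prod_nonneg) (use rng in auto)
    have "worlds S ar n = {w. w \<subseteq> gatoms S ar n \<and> w \<inter> {} = {}}" unfolding worlds_def by auto
    then show "(\<Sum>w\<in>worlds S ar n. rbn_dist S ar F n w) = 1"
      using marg[of "{}" n "{}"] by simp
  qed
  have exch: "exchangeable S ar n (rbn_dist S ar F n)" for n
    unfolding exchangeable_def
  proof (intro ballI impI)
    fix w w' assume "isomorphic_worlds S ar n w w'"
    then obtain \<pi> where bij: "bij_betw \<pi> {..<n} {..<n}"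
      and iso: "\<forall>(r, i)\<in>gatoms S ar n. ((r, i) \<in> w \<longleftrightarrow> (r, map \<pi> i) \<in> w')"
      unfolding isomorphic_worlds_def by blast
    define h :: "'r gatom \<Rightarrow> 'r gatom" where "h = (\<lambda>(r, i). (r, map \<pi> i))"
    have pin: "\<pi> x < n" if "x < n" for x
      using bij that unfolding bij_betw_def by auto
    have himg: "h ` gatoms S ar n \<subseteq> gatoms S ar n"
      unfolding h_def by (auto simp: mem_gatoms pin subset_iff)
    have hinj: "inj_on h (gatoms S ar n)"
    proof
      fix a b assume a: "a \<in> gatoms S ar n" and b: "b \<in> gatoms S ar n" and e: "h a = h b"
      obtain r i where ri: "a = (r, i)" by fastforce
      obtain s j where sj: "b = (s, j)" by fastforce
      have "map \<pi> i = map \<pi> j" "r = s" using e ri sj unfolding h_def by auto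
      moreover have "inj_on \<pi> (set i \<union> set j)"
      proof (rule inj_on_subset)
        show "inj_on \<pi> {..<n}" using bij unfolding bij_betw_def by simp
        show "set i \<union> set j \<subseteq> {..<n}" using a b ri sj by (simp add: mem_gatoms)
      qed
      ultimately have "i = j" using map_inj_on by blast
      then show "a = b" using ri sj \<open>r = s\<close> by simp
    qed
    have hbij: "bij_betw h (gatoms S ar n) (gatoms S ar n)"
      unfolding bij_betw_def using hinj endo_inj_surj[OF fin himg hinj] by simp
    have "rbn_dist S ar F n w' = (\<Prod>a\<in>gatoms S ar n. cpv (pv F) (h a) w')"
      unfolding rbn_dist_eq by (rule prod.reindex_bij_betw[OF hbij, symmetric])
    also have "\<dots> = (\<Prod>a\<in>gatoms S ar n. cpv (pv F) a w)"
    proof (rule prod.cong[OF refl])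
      fix a assume a: "a \<in> gatoms S ar n"
      obtain r i where ri: "a = (r, i)" by fastforce
      have wf: "wf_pform S ar (length i) (F r)" and si: "set i \<subseteq> {..<n}"
        using a ri assms(2) by (auto simp: mem_gatoms)
      have "peval (F r) (map \<pi> i) w' = peval (F r) i w"
        using peval_perm[OF si iso wf] .
      moreover have "(r, i) \<in> w \<longleftrightarrow> (r, map \<pi> i) \<in> w'" using iso a ri by blast
      ultimately show "cpv (pv F) (h a) w' = cpv (pv F) a w"
        unfolding ri h_def cpv_def pv_def by simp
    qed
    finally show "rbn_dist S ar F n w = rbn_dist S ar F n w'" unfolding rbn_dist_eq by simp
  qed
  have proj: "marginal S ar n (rbn_dist S ar F n) m w = rbn_dist S ar F m w"
    if "m < n" "w \<in> worlds S ar m" for m n w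
  proof -
    have sub: "gatoms S ar m \<subseteq> gatoms S ar n" using that(1) by (auto simp: gatoms_def)
    have "{w'\<in>worlds S ar n. w' \<inter> gatoms S ar m = w} = {w'. w' \<subseteq> gatoms S ar n \<and> w' \<inter> gatoms S ar m = w}"
      unfolding worlds_def by auto
    then have "marginal S ar n (rbn_dist S ar F n) m w
        = (\<Sum>w'\<in>{w'. w' \<subseteq> gatoms S ar n \<and> w' \<inter> gatoms S ar m = w}. rbn_dist S ar F n w')"
      unfolding marginal_def by simp
    also have "\<dots> = (\<Prod>a\<in>gatoms S ar m. cpv (pv F) a w)"
      by (rule marg[OF sub closed[of m]]) (use that(2) in \<open>simp add: worlds_def\<close>)
    also have "\<dots> = rbn_dist S ar F m w" by (simp only: rbn_dist_eq)
    finally show ?thesis .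
  qed
  have "projective S ar (rbn_dist S ar F)" unfolding projective_def
  proof (intro conjI allI impI ballI)
    fix n show "exchangeable S ar n (rbn_dist S ar F n)" by (rule exch)
  next
    fix m n w assume "m < n" "w \<in> worlds S ar m"
    then show "marginal S ar n (rbn_dist S ar F n) m w = rbn_dist S ar F m w" by (rule proj)
  qed
  then show ?thesis using rrsm by blast
qed

end
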